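(* Let $A$ be an $(n-2)\times n$ integer matrix of rank $n-2$ with columns $a_1,\dots,a_n$ such that some $w\in\mathbb Q^{n-2}$ satisfies $w\cdot a_i=1$ for all $i$, and let $B=(b_{i\ell})$ be an $n\times2$ integer matrix whose columns form a $\mathbb Z$-basis of $\ker_{\mathbb Z}(A)$. Define the dual full discriminant $\tilde E_B(x_1,\dots,x_n)=\tilde{\mathcal C}_B(b_{i\ell}x_i,\ i=1,\dots,n,\ \ell=1,2)$, i.e. the dual Chow form evaluated at $y_{i\ell}=b_{i\ell}x_i$. Then $\tilde E_B$ has no monomial factors: no variable $x_i$ divides $\tilde E_B$.
   Context: $X_B\subset\mathbf P^{n-1}$ is the codimension-2 toric variety defined by the ideal $I_B\subset k[x_1,\dots,x_n]$ ($k$ of characteristic zero) generated by all binomials $x^{u_+}-x^{u_-}$ with $u=u_+-u_-\in\ker_{\mathbb Z}(A)$. With $Y=(y_{i\ell})$ an $n\times 2$ matrix of indeterminates, the dual Chow form $\tilde{\mathcal C}_B\in\mathbb Z[y_{i\ell}]$ is the irreducible polynomial (unique up to sign) vanishing exactly when the line $\{(y_{11}+ty_{12}:\cdots:y_{n1}+ty_{n2})\}$ meets $X_B$. *)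

theory Defs
  imports Complex_Main "HOL-Library.Poly_Mapping" "HOL-Computational_Algebra.Factorial_Ring"
begin

(* Multivariate polynomials with integer coefficients, in variables indexed by 'v,
  are elements of ('v \<Rightarrow>0 nat) \<Rightarrow>0 int (monomial \<mapsto> coefficient), with the
  convolution ring structure from HOL-Library.Poly_Mapping. *)

type_synonym 'v mpoly_int = "('v \<Rightarrow>\<^sub>0 nat) \<Rightarrow>\<^sub>0 int"

definition mpoly_var :: "'v \<Rightarrow> 'v mpoly_int" where
  "mpoly_var v = Poly_Mapping.single (Poly_Mapping.single v 1) 1"

definition mpoly_vars :: "'v mpoly_int \<Rightarrow> 'v set" where
  "mpoly_vars p = {v. \<exists>m\<in>Poly_Mapping.keys p. v \<in> Poly_Mapping.keys m}"

definition mpoly_eval :: "'v mpoly_int \<Rightarrow> ('v \<Rightarrow> complex) \<Rightarrow> complex" where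
  "mpoly_eval p f = (\<Sum>m\<in>Poly_Mapping.keys p. of_int (Poly_Mapping.lookup p m) * (\<Prod>v\<in>Poly_Mapping.keys m. f v ^ Poly_Mapping.lookup m v))"

(* Substitution y_{i l} := b_{i l} * x_i  (variables y indexed by (i,l), l\<in>{0,1}). *)
definition subst_B :: "(nat \<Rightarrow> nat \<Rightarrow> int) \<Rightarrow> (nat \<times> nat) mpoly_int \<Rightarrow> nat mpoly_int" where
  "subst_B B p = (\<Sum>m\<in>Poly_Mapping.keys p. Poly_Mapping.single 0 (Poly_Mapping.lookup p m) *
      (\<Prod>v\<in>Poly_Mapping.keys m. (Poly_Mapping.single (Poly_Mapping.single (fst v) 1) (B (fst v) (snd v)))
                         ^ Poly_Mapping.lookup m v))"

(* Matrices are functions nat \<Rightarrow> nat \<Rightarrow> int; A has rows r < n-2, columns j < n. *)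

definition full_row_rank :: "nat \<Rightarrow> nat \<Rightarrow> (nat \<Rightarrow> nat \<Rightarrow> int) \<Rightarrow> bool" where
  "full_row_rank m n A \<longleftrightarrow>
     (\<forall>c :: nat \<Rightarrow> rat. (\<forall>j<n. (\<Sum>r<m. c r * of_int (A r j)) = 0) \<longrightarrow> (\<forall>r<m. c r = 0))"

definition kerZ :: "nat \<Rightarrow> nat \<Rightarrow> (nat \<Rightarrow> nat \<Rightarrow> int) \<Rightarrow> (nat \<Rightarrow> int) set" where
  "kerZ m n A = {u. \<forall>r<m. (\<Sum>j<n. A r j * u j) = 0}"

definition is_Z_basis_of_ker :: "nat \<Rightarrow> nat \<Rightarrow> (nat \<Rightarrow> nat \<Rightarrow> int) \<Rightarrow> (nat \<Rightarrow> nat \<Rightarrow> int) \<Rightarrow> bool" where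
  "is_Z_basis_of_ker m n A B \<longleftrightarrow>
     (\<forall>l<2. (\<lambda>i. B i l) \<in> kerZ m n A) \<and>
     (\<forall>u \<in> kerZ m n A. \<exists>c1 c2 :: int. \<forall>i<n. u i = c1 * B i 0 + c2 * B i 1) \<and>
     (\<forall>c1 c2 :: int. (\<forall>i<n. c1 * B i 0 + c2 * B i 1 = 0) \<longrightarrow> c1 = 0 \<and> c2 = 0)"

(* The toric variety X_B, as a set of (nonzero) representatives z in C^n of points of P^{n-1}:
  common zeros of all binomials x^{u+} - x^{u-}, u \<in> ker_Z(A). *)
definition toric_XB :: "nat \<Rightarrow> nat \<Rightarrow> (nat \<Rightarrow> nat \<Rightarrow> int) \<Rightarrow> (nat \<Rightarrow> complex) set" where
  "toric_XB m n A = {z. (\<exists>i<n. z i \<noteq> 0) \<and>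
      (\<forall>u \<in> kerZ m n A. (\<Prod>i<n. z i ^ nat (max (u i) 0)) = (\<Prod>i<n. z i ^ nat (max (- u i) 0)))}"

(* y (an n x 2 complex matrix) has linearly independent columns, so it spans a line in P^{n-1}. *)
definition indep_cols :: "nat \<Rightarrow> (nat \<Rightarrow> nat \<Rightarrow> complex) \<Rightarrow> bool" where
  "indep_cols n y \<longleftrightarrow> (\<forall>s t. (\<forall>i<n. s * y i 0 + t * y i 1 = 0) \<longrightarrow> s = 0 \<and> t = 0)"

definition line_meets_XB :: "nat \<Rightarrow> nat \<Rightarrow> (nat \<Rightarrow> nat \<Rightarrow> int) \<Rightarrow> (nat \<Rightarrow> nat \<Rightarrow> complex) \<Rightarrow> bool" where
  "line_meets_XB m n A y \<longleftrightarrow>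
     (\<exists>s t. (s, t) \<noteq> (0, 0) \<and> (\<lambda>i. s * y i 0 + t * y i 1) \<in> toric_XB m n A)"

(* C is a (the, up to sign) dual Chow form of X_B: an irreducible integer polynomial in the
  variables y_{i l} (i<n, l<2) whose zero locus on lines (y with independent columns) is exactly
  the set of lines meeting X_B. *)
definition is_dual_chow_form :: "nat \<Rightarrow> nat \<Rightarrow> (nat \<Rightarrow> nat \<Rightarrow> int) \<Rightarrow> (nat \<times> nat) mpoly_int \<Rightarrow> bool" where
  "is_dual_chow_form m n A C \<longleftrightarrow>
     irreducible C \<and> mpoly_vars C \<subseteq> {..<n} \<times> {..<2} \<and>
     (\<forall>y. indep_cols n y \<longrightarrow>
        (mpoly_eval C (\<lambda>v. y (fst v) (snd v)) = 0 \<longleftrightarrow> line_meets_XB m n A y))"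

end

theory Submission
  imports Defs
begin


definition mon :: "('v \<Rightarrow>\<^sub>0 nat) \<Rightarrow> ('v \<Rightarrow> complex) \<Rightarrow> complex" where
  "mon m f = (\<Prod>v\<in>Poly_Mapping.keys m. f v ^ Poly_Mapping.lookup m v)"

lemma mon_superset: "finite S \<Longrightarrow> Poly_Mapping.keys m \<subseteq> S \<Longrightarrow>
   mon m f = (\<Prod>v\<in>S. f v ^ Poly_Mapping.lookup m v)"
  unfolding mon_def by (rule prod.mono_neutral_left) (auto simp: in_keys_iff)

lemma mon_add: "mon (m1 + m2) f = mon m1 f * mon m2 f"
proof -
  let ?S = "Poly_Mapping.keys m1 \<union> Poly_Mapping.keys m2"
  have "mon (m1 + m2) f = (\<Prod>v\<in>?S. f v ^ Poly_Mapping.lookup (m1+m2) v)"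
    by (rule mon_superset) (auto simp: keys_add)
  also have "\<dots> = (\<Prod>v\<in>?S. f v ^ Poly_Mapping.lookup m1 v) * (\<Prod>v\<in>?S. f v ^ Poly_Mapping.lookup m2 v)"
    by (simp add: lookup_add power_add prod.distrib)
  also have "\<dots> = mon m1 f * mon m2 f"
    by (simp add: mon_superset[of ?S m1] mon_superset[of ?S m2])
  finally show ?thesis .
qed

lemma mon_zero[simp]: "mon 0 f = 1" by (simp add: mon_def)

lemma mon_single1[simp]: "mon (Poly_Mapping.single v (Suc 0)) f = f v" by (simp add: mon_def)

lemma eval_mon: "mpoly_eval p f = (\<Sum>m\<in>Poly_Mapping.keys p. of_int (Poly_Mapping.lookup p m) * mon m f)"
  by (simp add: mpoly_eval_def mon_def)

lemma eval_superset: "finite S \<Longrightarrow> Poly_Mapping.keys p \<subseteq> S \<Longrightarrow>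
   mpoly_eval p f = (\<Sum>m\<in>S. of_int (Poly_Mapping.lookup p m) * mon m f)"
  unfolding eval_mon by (rule sum.mono_neutral_left) (auto simp: in_keys_iff)

lemma eval_add: "mpoly_eval (p + q) f = mpoly_eval p f + mpoly_eval q f"
proof -
  let ?S = "Poly_Mapping.keys p \<union> Poly_Mapping.keys q"
  have "mpoly_eval (p + q) f = (\<Sum>m\<in>?S. of_int (Poly_Mapping.lookup (p+q) m) * mon m f)"
    by (rule eval_superset) (auto simp: keys_add)
  also have "\<dots> = (\<Sum>m\<in>?S. of_int (Poly_Mapping.lookup p m) * mon m f) + (\<Sum>m\<in>?S. of_int (Poly_Mapping.lookup q m) * mon m f)"
    by (simp add: lookup_add distrib_right sum.distrib)
  also have "\<dots> = mpoly_eval p f + mpoly_eval q f"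
    by (simp add: eval_superset[of ?S p] eval_superset[of ?S q])
  finally show ?thesis .
qed

lemma eval_zero[simp]: "mpoly_eval 0 f = 0" by (simp add: mpoly_eval_def)

lemma eval_sum: "mpoly_eval (\<Sum>a\<in>A. g a) f = (\<Sum>a\<in>A. mpoly_eval (g a) f)"
  by (induction A rule: infinite_finite_induct) (auto simp: eval_add)

lemma eval_single[simp]: "mpoly_eval (Poly_Mapping.single m c) f = of_int c * mon m f"
  by (simp add: eval_mon)

lemma decomp: "p = (\<Sum>m\<in>Poly_Mapping.keys p. Poly_Mapping.single m (Poly_Mapping.lookup p m))"
proof (rule poly_mapping_eqI)
  fix k
  show "Poly_Mapping.lookup p k = Poly_Mapping.lookup (\<Sum>m\<in>Poly_Mapping.keys p. Poly_Mapping.single m (Poly_Mapping.lookup p m)) k"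
    by (simp add: lookup_sum lookup_single when_def in_keys_iff)
qed

lemma eval_mult: "mpoly_eval (p * q) f = mpoly_eval p f * mpoly_eval q f"
proof -
  have "p * q = (\<Sum>a\<in>Poly_Mapping.keys p. Poly_Mapping.single a (Poly_Mapping.lookup p a)) *
     (\<Sum>b\<in>Poly_Mapping.keys q. Poly_Mapping.single b (Poly_Mapping.lookup q b))"
    by (subst decomp[of p], subst decomp[of q]) (rule refl)
  also have "\<dots> = (\<Sum>a\<in>Poly_Mapping.keys p. \<Sum>b\<in>Poly_Mapping.keys q.
       Poly_Mapping.single (a + b) (Poly_Mapping.lookup p a * Poly_Mapping.lookup q b))"
    by (simp add: sum_distrib_left sum_distrib_right mult_single sum.swap[of _ "Poly_Mapping.keys q"])
  finally have "mpoly_eval (p * q) f = (\<Sum>a\<in>Poly_Mapping.keys p. \<Sum>b\<in>Poly_Mapping.keys q.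
       of_int (Poly_Mapping.lookup p a) * of_int (Poly_Mapping.lookup q b) * (mon a f * mon b f))"
    by (simp add: eval_sum mon_add)
  also have "\<dots> = mpoly_eval p f * mpoly_eval q f"
    unfolding eval_mon sum_product by (simp add: mult_ac)
  finally show ?thesis .
qed

lemma eval_one[simp]: "mpoly_eval 1 f = 1"
  by (metis eval_single mon_zero mult_1 of_int_1 single_one)

lemma eval_prod: "mpoly_eval (\<Prod>a\<in>A. g a) f = (\<Prod>a\<in>A. mpoly_eval (g a) f)"
  by (induction A rule: infinite_finite_induct) (auto simp: eval_mult)

lemma eval_power: "mpoly_eval (p ^ k) f = mpoly_eval p f ^ k"
  by (induction k) (auto simp: eval_mult)

lemma eval_var: "mpoly_eval (mpoly_var i) f = f i"
  by (simp add: mpoly_var_def)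

lemma eval_subst: "mpoly_eval (subst_B B C) x =
   mpoly_eval C (\<lambda>v. of_int (B (fst v) (snd v)) * x (fst v))"
  unfolding subst_B_def eval_sum mpoly_eval_def[of C]
  by (simp add: eval_mult eval_prod eval_power mult_ac)



lemma kerZ_sum_zero:
  assumes w: "\<forall>i<n. (\<Sum>r<m. w r * of_int (A r i)) = (1::rat)"
    and u: "u \<in> kerZ m n A"
  shows "(\<Sum>j<n. u j) = 0"
proof -
  have "(of_int (\<Sum>j<n. u j) :: rat) = (\<Sum>j<n. (\<Sum>r<m. w r * of_int (A r j)) * of_int (u j))"
    using w by simp
  also have "\<dots> = (\<Sum>r<m. w r * of_int (\<Sum>j<n. A r j * u j))"
    by (simp add: sum_distrib_left sum_distrib_right mult_ac sum.swap[of _ "{..<m}"])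
  also have "\<dots> = 0" using u by (simp add: kerZ_def)
  finally have "(of_int (\<Sum>j<n. u j) :: rat) = 0" .
  then show ?thesis by (simp only: of_int_eq_0_iff)
qed

lemma kerZ_comb:
  fixes B :: "nat \<Rightarrow> nat \<Rightarrow> int"
  assumes "\<forall>l<2. (\<lambda>i. B i l) \<in> kerZ m n A"
  shows "(\<lambda>j. c1 * B j 0 + c2 * B j 1) \<in> kerZ m n A"
proof -
  have 0: "\<forall>r<m. (\<Sum>j<n. A r j * B j 0) = 0" and 1: "\<forall>r<m. (\<Sum>j<n. A r j * B j 1) = 0"
    using assms[rule_format, of 0] assms[rule_format, of 1] by (auto simp: kerZ_def)
  show ?thesis unfolding kerZ_def
  proof (intro CollectI allI impI)
    fix r assume r: "r < m"
    have "(\<Sum>j<n. A r j * (c1 * B j 0 + c2 * B j 1)) = c1 * (\<Sum>j<n. A r j * B j 0) + c2 * (\<Sum>j<n. A r j * B j 1)"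
      by (simp add: algebra_simps sum.distrib sum_distrib_left)
    then show "(\<Sum>j<n. A r j * (c1 * B j 0 + c2 * B j 1)) = 0" using 0 1 r by simp
  qed
qed

lemma minor_exists:
  assumes ind: "\<forall>c1 c2 :: int. (\<forall>i<n. c1 * B i 0 + c2 * B i 1 = 0) \<longrightarrow> c1 = 0 \<and> c2 = 0"
  shows "\<exists>p<n. \<exists>q<n. B p 0 * B q 1 - B p 1 * B q 0 \<noteq> 0"
proof (rule ccontr)
  assume H: "\<not> ?thesis"
  show False
  proof (cases "\<forall>j<n. B j 0 = 0")
    case True
    then show False using ind[rule_format, of 1 0] by simp
  next
    case False
    then obtain p where p: "p < n" "B p 0 \<noteq> 0" by auto
    have "\<forall>j<n. B p 1 * B j 0 + (- B p 0) * B j 1 = 0"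
    proof (intro allI impI)
      fix j assume "j < n"
      then have "B p 0 * B j 1 - B p 1 * B j 0 = 0" using H p by auto
      then show "B p 1 * B j 0 + (- B p 0) * B j 1 = 0" by (simp add: algebra_simps)
    qed
    then show False using ind[rule_format, of "B p 1" "- B p 0"] p by auto
  qed
qed

lemma indepC:
  assumes ind: "\<forall>c1 c2 :: int. (\<forall>i<n. c1 * B i 0 + c2 * B i 1 = 0) \<longrightarrow> c1 = 0 \<and> c2 = 0"
    and h: "\<forall>j<n. s * of_int (B j 0) + t * of_int (B j 1) = (0::complex)"
  shows "s = 0 \<and> t = 0"
proof -
  obtain p q where pq: "p < n" "q < n" and d: "B p 0 * B q 1 - B p 1 * B q 0 \<noteq> 0"
    using minor_exists[OF ind] by auto
  define D where "D = (of_int (B p 0 * B q 1 - B p 1 * B q 0) :: complex)"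
  have D: "D \<noteq> 0" unfolding D_def by (subst of_int_eq_0_iff) (rule d)
  have hp: "s * of_int (B p 0) + t * of_int (B p 1) = 0" and hq: "s * of_int (B q 0) + t * of_int (B q 1) = 0"
    using h pq by auto
  have "s * D = of_int (B q 1) * (s * of_int (B p 0) + t * of_int (B p 1)) - of_int (B p 1) * (s * of_int (B q 0) + t * of_int (B q 1))"
    unfolding D_def by (simp add: algebra_simps)
  then have "s * D = 0" using hp hq by simp
  moreover have "t * D = of_int (B p 0) * (s * of_int (B q 0) + t * of_int (B q 1)) - of_int (B q 0) * (s * of_int (B p 0) + t * of_int (B p 1))"
    unfolding D_def by (simp add: algebra_simps)
  then have "t * D = 0" using hp hq by simp
  ultimately show ?thesis using D by simp
qed

lemma perp2:
  fixes b0 b1 :: int and s t :: complex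
  assumes "b0 \<noteq> 0 \<or> b1 \<noteq> 0" "s * of_int b0 + t * of_int b1 = 0"
  shows "\<exists>c. s = c * of_int b1 \<and> t = - c * of_int b0"
proof (cases "b0 = 0")
  case True
  then have "t = 0" using assms by simp
  then show ?thesis using True assms by (intro exI[of _ "s / of_int b1"]) auto
next
  case False
  then have b: "(of_int b0 :: complex) \<noteq> 0" by simp
  have "s = (- t / of_int b0) * of_int b1"
    using assms(2) b by (simp add: field_simps) (metis add.commute add_eq_0_iff mult.commute)
  moreover have "t = - (- t / of_int b0) * of_int b0" using b by simp
  ultimately show ?thesis by blast
qed

lemma violation:
  fixes n k :: nat and u :: "nat \<Rightarrow> int"
  assumes k: "k < n" "z k = 0" "u k > 0" and neg: "\<forall>j<n. u j < 0 \<longrightarrow> z j \<noteq> (0::complex)"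
  shows "(\<Prod>j<n. z j ^ nat (max (u j) 0)) \<noteq> (\<Prod>j<n. z j ^ nat (max (- u j) 0))"
proof -
  have "(\<Prod>j<n. z j ^ nat (max (u j) 0)) = 0"
  proof -
    have "z k ^ nat (max (u k) 0) = 0" using k by simp
    with k show ?thesis by (intro prod_zero finite_lessThan bexI[of _ k]) auto
  qed
  moreover have "(\<Prod>j<n. z j ^ nat (max (- u j) 0)) \<noteq> 0"
  proof
    assume "(\<Prod>j<n. z j ^ nat (max (- u j) 0)) = 0"
    then obtain j where "j < n" "z j ^ nat (max (- u j) 0) = 0" by auto
    then show False using neg by (auto split: if_splits simp: max_def)
  qed
  ultimately show ?thesis by argo
qed



lemma fac:
  fixes c :: "nat \<Rightarrow> complex" and e :: "nat \<Rightarrow> nat"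
  assumes "q < n"
  shows "(\<Prod>j<n. ((if j = q then a else 1) * c j) ^ e j) = a ^ e q * (\<Prod>j<n. c j ^ e j)"
proof -
  have "(\<Prod>j<n. (if j = q then a else 1) ^ e j) = (\<Prod>j<n. if j = q then a ^ e q else 1)"
    by (rule prod.cong) auto
  also have "\<dots> = a ^ e q" using assms by simp
  finally show ?thesis unfolding power_mult_distrib prod.distrib by simp
qed

lemma two_pow_inj: "(2::complex) ^ a = 2 ^ b \<Longrightarrow> a = b"
proof -
  assume h: "(2::complex) ^ a = 2 ^ b"
  have "(of_nat (2 ^ a) :: complex) = of_nat (2 ^ b)" using h by simp
  then have "(2::nat) ^ a = 2 ^ b" by (simp only: of_nat_eq_iff)
  then show "a = b" by simp
qed

theorem lemma3p3:
  fixes n :: nat and A :: "nat \<Rightarrow> nat \<Rightarrow> int" and B :: "nat \<Rightarrow> nat \<Rightarrow> int"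
    and C :: "(nat \<times> nat) mpoly_int"
  assumes "n \<ge> 2"
    and "full_row_rank (n - 2) n A"
    and "\<exists>w :: nat \<Rightarrow> rat. \<forall>i<n. (\<Sum>r<n - 2. w r * of_int (A r i)) = 1"
    and "is_Z_basis_of_ker (n - 2) n A B"
    and "is_dual_chow_form (n - 2) n A C"
  shows "\<forall>i<n. \<not> mpoly_var i dvd subst_B B C"
proof (intro allI impI)
  fix i assume i: "i < n"
  obtain w where w: "\<forall>i<n. (\<Sum>r<n - 2. w r * of_int (A r i)) = (1::rat)" using assms(3) by blast
  have kerB: "\<forall>l<2. (\<lambda>i. B i l) \<in> kerZ (n-2) n A"
    and ind: "\<forall>c1 c2 :: int. (\<forall>i<n. c1 * B i 0 + c2 * B i 1 = 0) \<longrightarrow> c1 = 0 \<and> c2 = 0"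
    using assms(4) unfolding is_Z_basis_of_ker_def by blast+
  have comb: "\<And>c1 c2. (\<lambda>j. c1 * B j 0 + c2 * B j 1) \<in> kerZ (n-2) n A"
    using kerZ_comb[OF kerB] .
  have sumz: "\<And>u. u \<in> kerZ (n-2) n A \<Longrightarrow> (\<Sum>j<n. u j) = 0"
    using kerZ_sum_zero[OF w] by blast
  have sumB0: "(\<Sum>j<n. B j 0) = 0" using sumz[OF comb[of 1 0]] by simp
  have sumB1: "(\<Sum>j<n. B j 1) = 0" using sumz[OF comb[of 0 1]] by simp
  define nz where "nz j \<longleftrightarrow> B j 0 \<noteq> 0 \<or> B j 1 \<noteq> 0" for j
  have "\<exists>j<n. nz j"
  proof (rule ccontr)
    assume "\<not> (\<exists>j<n. nz j)"
    then have "\<forall>j<n. 1 * B j 0 + 0 * B j 1 = 0" by (auto simp: nz_def)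
    then show False using ind[rule_format, of 1 0] by simp
  qed
  then obtain k0 where k0: "k0 < n" "nz k0" by blast
  define k where "k = (if nz i then i else k0)"
  have k: "k < n" "nz k" "k = i \<or> \<not> nz i"
    unfolding k_def using i k0 by auto
  define u where "u j = B j 0 * B k 1 - B j 1 * B k 0" for j
  have u_eq: "u = (\<lambda>j. B k 1 * B j 0 + (- B k 0) * B j 1)"
    by (auto simp: u_def fun_eq_iff algebra_simps)
  have uker: "u \<in> kerZ (n-2) n A" unfolding u_eq by (rule comb)
  have uk: "u k = 0" by (simp add: u_def mult.commute)
  have ui: "u i = 0" using k uk by (auto simp: u_def nz_def)
  obtain q where q: "q < n" "u q \<noteq> 0"
  proof -
    have "\<exists>q<n. u q \<noteq> 0"
    proof (rule ccontr)
      assume "\<not> (\<exists>q<n. u q \<noteq> 0)"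
      then have "\<forall>j<n. B k 1 * B j 0 + (- B k 0) * B j 1 = 0" by (auto simp: u_eq)
      then have "B k 1 = 0 \<and> - B k 0 = 0" using ind[rule_format, of "B k 1" "- B k 0"] by blast
      then show False using k(2) by (auto simp: nz_def)
    qed
    then show ?thesis using that by blast
  qed
  have qi: "q \<noteq> i" and qk: "q \<noteq> k" using q ui uk by auto
  define pos where "pos j = nat (max (u j) 0)" for j
  define neg where "neg j = nat (max (- u j) 0)" for j
  define G where "G a \<longleftrightarrow> (\<Prod>j<n. ((if j = q then a else 1) * of_int (u j)) ^ pos j) =
      (\<Prod>j<n. ((if j = q then a else 1) * of_int (u j)) ^ neg j)" for a :: complex
  have notboth: "\<not> (G 1 \<and> G 2)"
  proof
    assume h: "G 1 \<and> G 2"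
    define P where "P = (\<Prod>j<n. (of_int (u j) :: complex) ^ pos j)"
    define N where "N = (\<Prod>j<n. (of_int (u j) :: complex) ^ neg j)"
    have P: "P \<noteq> 0" unfolding P_def by (subst prod_zero_iff) (auto simp: pos_def)
    have h1: "G 1" and h2: "G 2" using h by auto
    have "1 ^ pos q * P = 1 ^ neg q * N" using h1 unfolding G_def P_def N_def fac[OF q(1)] .
    then have PN: "P = N" by simp
    have "2 ^ pos q * P = 2 ^ neg q * N" using h2 unfolding G_def P_def N_def fac[OF q(1)] .
    then have "(2::complex) ^ pos q * P = 2 ^ neg q * P" unfolding PN .
    then have "(2::complex) ^ pos q = 2 ^ neg q" using P by simp
    then have "pos q = neg q" by (rule two_pow_inj)
    then show False using q(2) by (auto simp: pos_def neg_def max_def split: if_splits)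
  qed
  obtain a where a: "a \<noteq> 0" "\<not> G a"
  proof (cases "G 1")
    case True
    then have "\<not> G 2" using notboth by blast
    then show ?thesis using that[of 2] by simp
  next
    case False
    then show ?thesis using that[of 1] by simp
  qed
  define x where "x j = (if j = i \<or> j = k then 0 else if j = q then a else (1::complex))" for j
  define y where "y j l = of_int (B j l) * x j" for j l
  have xne: "\<And>j. j \<noteq> i \<Longrightarrow> j \<noteq> k \<Longrightarrow> x j \<noteq> 0" using a by (auto simp: x_def)
  define v where "v s t j = s * of_int (B j 0) + t * of_int (B j 1)" for s t :: complex and j
  have zx: "\<And>s t j. s * y j 0 + t * y j 1 = x j * v s t j"
    by (simp add: y_def v_def algebra_simps)
  have vsum: "\<And>s t. (\<Sum>j<n. v s t j) = 0"
  proof -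
    fix s t :: complex
    have s0: "(\<Sum>j<n. (of_int (B j 0)::complex)) = 0" using sumB0 by (metis of_int_0 of_int_sum)
    have s1: "(\<Sum>j<n. (of_int (B j 1)::complex)) = 0" using sumB1 by (metis of_int_0 of_int_sum)
    have "(\<Sum>j<n. v s t j) = s * (\<Sum>j<n. (of_int (B j 0)::complex)) + t * (\<Sum>j<n. (of_int (B j 1)::complex))"
      by (simp add: v_def sum.distrib sum_distrib_left)
    then show "(\<Sum>j<n. v s t j) = 0" using s0 s1 by simp
  qed
  have vzero: "v s t k = 0" if h: "\<forall>j<n. j \<noteq> k \<longrightarrow> v s t j = 0" for s t
  proof -
    have "(\<Sum>j<n. v s t j) = v s t k + (\<Sum>j\<in>{..<n}-{k}. v s t j)" using k(1) by (simp add: sum.remove)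
    also have "(\<Sum>j\<in>{..<n}-{k}. v s t j) = 0" using h by (intro sum.neutral) auto
    finally show ?thesis using vsum by simp
  qed
  have indep: "indep_cols n y"
    unfolding indep_cols_def
  proof (intro allI impI)
    fix s t assume h: "\<forall>i<n. s * y i 0 + t * y i 1 = 0"
    have h': "\<forall>j<n. j \<noteq> k \<longrightarrow> v s t j = 0"
    proof (intro allI impI)
      fix j assume j: "j < n" "j \<noteq> k"
      show "v s t j = 0"
      proof (cases "j = i")
        case True then have "\<not> nz i" using k(3) j by auto
        then show ?thesis using True by (simp add: v_def nz_def)
      next
        case False then have "x j \<noteq> 0" using xne j by auto
        moreover have "x j * v s t j = 0" using h j zx by metis
        ultimately show ?thesis by simp
      qed
    qed
    then have "v s t k = 0" by (rule vzero)
    with h' have "\<forall>j<n. v s t j = 0" by auto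
    then have "\<forall>j<n. s * of_int (B j 0) + t * of_int (B j 1) = 0" unfolding v_def .
    then show "s = 0 \<and> t = 0" by (rule indepC[OF ind])
  qed
  have notmeet: "\<not> line_meets_XB (n-2) n A y"
  proof
    assume "line_meets_XB (n-2) n A y"
    then obtain s t where st: "(s, t) \<noteq> (0, 0)"
      and zin: "(\<lambda>i. s * y i 0 + t * y i 1) \<in> toric_XB (n-2) n A"
      unfolding line_meets_XB_def by blast
    define z where "z j = x j * v s t j" for j
    have zeq: "(\<lambda>i. s * y i 0 + t * y i 1) = z" by (rule ext) (simp only: z_def zx)
    have bin: "\<And>u'. u' \<in> kerZ (n-2) n A \<Longrightarrow>
        (\<Prod>j<n. z j ^ nat (max (u' j) 0)) = (\<Prod>j<n. z j ^ nat (max (- u' j) 0))"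
      using zin unfolding zeq toric_XB_def by blast
    have zk: "z k = 0" by (simp add: z_def x_def)
    show False
    proof (cases "v s t k = 0")
      case False
      note vk = False
      obtain c1 c2 :: int where cc: "c1 * B k 0 + c2 * B k 1 \<noteq> 0"
        "\<forall>j<n. c1 * B j 0 + c2 * B j 1 \<noteq> 0 \<longrightarrow> v s t j \<noteq> 0"
      proof (cases "\<forall>p<n. nz p \<longrightarrow> v s t p \<noteq> 0")
        case allnz: True
        show ?thesis
        proof (cases "B k 0 = 0")
          case True
          then have "B k 1 \<noteq> 0" using k(2) nz_def by auto
          then show ?thesis using that[of 0 1] allnz by (auto simp: nz_def)
        next
          case False
          then show ?thesis using that[of 1 0] allnz by (auto simp: nz_def)
        qed
      next
        case False
        then obtain p where p: "p < n" "nz p" "v s t p = 0" by auto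
        obtain c where c: "s = c * of_int (B p 1)" "t = - c * of_int (B p 0)"
          using perp2[of "B p 0" "B p 1" s t] p by (auto simp: nz_def v_def)
        have cne: "c \<noteq> 0" using st c by auto
        have vj: "\<And>j. v s t j = c * of_int (B p 1 * B j 0 + (- B p 0) * B j 1)"
          by (simp add: v_def c algebra_simps)
        show ?thesis
        proof (rule that[of "B p 1" "- B p 0"])
          show "B p 1 * B k 0 + - B p 0 * B k 1 \<noteq> 0" using vk vj[of k] by (metis mult_zero_right of_int_0)
          show "\<forall>j<n. B p 1 * B j 0 + - B p 0 * B j 1 \<noteq> 0 \<longrightarrow> v s t j \<noteq> 0"
          proof (intro allI impI)
            fix j assume "j < n" "B p 1 * B j 0 + - B p 0 * B j 1 \<noteq> 0"
            then have "(of_int (B p 1 * B j 0 + - B p 0 * B j 1)::complex) \<noteq> 0"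
              by (simp only: of_int_eq_0_iff not_False_eq_True)
            then show "v s t j \<noteq> 0" unfolding vj using cne by (metis mult_eq_0_iff)
          qed
        qed
      qed
      define e :: int where "e = (if c1 * B k 0 + c2 * B k 1 > 0 then 1 else -1)"
      define u' where "u' j = (e*c1) * B j 0 + (e*c2) * B j 1" for j
      have u'ker: "u' \<in> kerZ (n-2) n A"
      proof -
        have "u' = (\<lambda>j. (e*c1) * B j 0 + (e*c2) * B j 1)" by (simp add: fun_eq_iff u'_def)
        then show ?thesis using comb by simp
      qed
      have u'j: "\<And>j. u' j = e * (c1 * B j 0 + c2 * B j 1)" by (simp add: u'_def algebra_simps)
      have u'k: "u' k > 0" using cc(1) unfolding u'j e_def by auto
      have negs: "\<forall>j<n. u' j < 0 \<longrightarrow> z j \<noteq> 0"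
      proof (intro allI impI)
        fix j assume j: "j < n" "u' j < 0"
        then have ne: "c1 * B j 0 + c2 * B j 1 \<noteq> 0" by (auto simp: u'j)
        then have "v s t j \<noteq> 0" using cc(2) j by auto
        moreover have jk: "j \<noteq> k" using j u'k by auto
        moreover have "j \<noteq> i"
        proof
          assume "j = i"
          then have "\<not> nz i" using k(3) jk by auto
          then show False using ne \<open>j = i\<close> by (auto simp: nz_def)
        qed
        ultimately show "z j \<noteq> 0" using xne by (simp add: z_def)
      qed
      show False using violation[OF k(1) zk u'k negs] bin[OF u'ker] by blast
    next
      case True
      obtain c where c: "s = c * of_int (B k 1)" "t = - c * of_int (B k 0)"
        using perp2[of "B k 0" "B k 1" s t] k(2) True by (auto simp: nz_def v_def)
      have cne: "c \<noteq> 0" using st c by auto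
      have vj: "\<And>j. v s t j = c * of_int (u j)" by (simp add: v_def c u_def algebra_simps)
      have ex: "(\<Prod>j<n. z j ^ e j) = c ^ (\<Sum>j<n. e j) * (\<Prod>j<n. ((if j = q then a else 1) * of_int (u j)) ^ e j)"
        if he: "\<And>j. u j = 0 \<Longrightarrow> e j = 0" for e :: "nat \<Rightarrow> nat"
      proof -
        have "(\<Prod>j<n. z j ^ e j) = (\<Prod>j<n. c ^ e j * (x j * of_int (u j)) ^ e j)"
          by (rule prod.cong) (auto simp: z_def vj power_mult_distrib)
        also have "\<dots> = c ^ (\<Sum>j<n. e j) * (\<Prod>j<n. (x j * of_int (u j)) ^ e j)"
          by (simp add: prod.distrib power_sum)
        also have "(\<Prod>j<n. (x j * of_int (u j)) ^ e j) = (\<Prod>j<n. ((if j = q then a else 1) * of_int (u j)) ^ e j)"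
        proof (rule prod.cong)
          fix j assume "j \<in> {..<n}"
          show "(x j * of_int (u j)) ^ e j = ((if j = q then a else 1) * of_int (u j)) ^ e j"
          proof (cases "j = i \<or> j = k")
            case True
            then have "u j = 0" using ui uk by auto
            then show ?thesis using he by simp
          next
            case False
            then show ?thesis using qi qk by (auto simp: x_def)
          qed
        qed simp
        finally show ?thesis .
      qed
      have ssum: "(\<Sum>j<n. pos j) = (\<Sum>j<n. neg j)"
      proof -
        have "(\<Sum>j<n. u j) = (\<Sum>j<n. int (pos j) - int (neg j))"
          by (rule sum.cong) (auto simp: pos_def neg_def)
        then have "(\<Sum>j<n. int (pos j)) - (\<Sum>j<n. int (neg j)) = 0"
          using sumz[OF uker] by (simp add: sum_subtractf)
        then have "int (\<Sum>j<n. pos j) = int (\<Sum>j<n. neg j)" by (simp only: of_nat_sum)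
        then show ?thesis by (simp only: of_nat_eq_iff)
      qed
      have hp: "\<And>j. u j = 0 \<Longrightarrow> pos j = 0" by (simp add: pos_def)
      have hn: "\<And>j. u j = 0 \<Longrightarrow> neg j = 0" by (simp add: neg_def)
      have "(\<Prod>j<n. z j ^ pos j) = (\<Prod>j<n. z j ^ neg j)"
        using bin[OF uker] unfolding pos_def neg_def .
      then have "c ^ (\<Sum>j<n. neg j) * (\<Prod>j<n. ((if j = q then a else 1) * of_int (u j)) ^ pos j) =
          c ^ (\<Sum>j<n. neg j) * (\<Prod>j<n. ((if j = q then a else 1) * of_int (u j)) ^ neg j)"
        by (simp only: ex[OF hp] ex[OF hn] ssum)
      then have "G a" using cne unfolding G_def by simp
      with a(2) show False by simp
    qed
  qed
  have "mpoly_eval C (\<lambda>v. y (fst v) (snd v)) \<noteq> 0"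
    using assms(5) indep notmeet unfolding is_dual_chow_form_def by blast
  moreover have "mpoly_eval (subst_B B C) x = mpoly_eval C (\<lambda>v. y (fst v) (snd v))"
    by (simp add: eval_subst y_def)
  ultimately have ev: "mpoly_eval (subst_B B C) x \<noteq> 0" by simp
  show "\<not> mpoly_var i dvd subst_B B C"
  proof
    assume "mpoly_var i dvd subst_B B C"
    then obtain r where "subst_B B C = mpoly_var i * r" by (auto elim: dvdE)
    then have "mpoly_eval (subst_B B C) x = x i * mpoly_eval r x" by (simp add: eval_mult eval_var)
    then show False using ev by (simp add: x_def)
  qed
qed

end
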